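(* Let $\alpha,\beta,\gamma>0$ with $\alpha<1/5-\gamma$, $\delta<1/2$, and $x_0,y\in\mathcal D(\delta)$ with $\|x_0-y\|\le\frac45r_\delta$ lying on different sides of a barrier $B_i$, $i\ge1$. Let $X$ be the snapping-out Brownian motion with $X_0=x_0$, and suppose the event $$\mathcal A:=\Big\{\mathcal E_1<\alpha r_\delta,\ \mathcal E_2>\beta r_\delta,\ \|W_t-(t/r_\delta^2)(y-x_0)\|\le\gamma r_\delta\ \forall t\le r_\delta^2\Big\}$$ occurs. Then there exists $t\le r_\delta^2$ with $s_i(L^{(i)}_t)\ne s_i(0)$.
   Context: Setting. $D\subseteq\mathbb R^2$ is the closure of a bounded open set $D_0$; $D$ is connected and simply connected, with $C^\infty$ boundary $B_0:=\partial D$, a simple closed curve. $B_1,\dots,B_m\subseteq D_0$ are $C^\infty$ simple closed curves with $B_i\cap B_j=\emptyset$ for $i\neq j$ ($0\le i,j\le m$). For each $i$, the positive side of $B_i$ is the closure of the bounded component of $\mathbb R^2\setminus B_i$, the negative side the closure of the unbounded component (points of $B_i$ lie on both sides); $\vec n_i$ is the unit normal field on $B_i$ pointing into the bounded component. Fix $\lambda_i^\pm>0$. Let $W_t$ be a standard planar Wiener process and, independently, $s_1,\dots,s_m$ independent càdlàg Markov chains on $\{-1,+1\}$, $s_i$ jumping from $-1$ to $+1$ at rate $\lambda_i^+$ and from $+1$ to $-1$ at rate $\lambda_i^-$; $s_0\equiv+1$. A snapping-out Brownian motion is a family of continuous processes $X_t\in D$, $L^{(i)}_t\ge0$ such that a.s.: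 (i) $dX_t=dW_t+\sum_{i=0}^m s_i(L^{(i)}_t)\vec n_i(X_t)\mathbf 1\{X_t\in B_i\}dL^{(i)}_t$; (ii) $L^{(i)}$ nondecreasing, $L^{(i)}_0=0$, $L^{(i)}_t=\int_0^t\mathbf 1\{X_r\in B_i\}dL^{(i)}_r$; (iii) $s_i(L^{(i)}_t)=+1$ (resp. $-1$) implies $X_t$ is on the positive (resp. negative) side of $B_i$. Here $s_i(0)$ is $+1$ if $x_0$ is on the positive side of $B_i$ and $-1$ otherwise. Parameters: $\lambda_{\max}=\max\lambda_j^\pm$; $\kappa$ maximal unsigned curvature of $B_0,\dots,B_m$; $\rho:=\sup\{r\ge0:\mathsf B(x,r')\cap\bigcup_jB_j\text{ connected }\forall r'\le r,\ x\in D\}$ ($\mathsf B$ = open ball); $r_\delta:=\delta\min\{1/\kappa,1/\lambda_{\max},\rho\}$; $\mathcal D(\delta):=\{x\in D:\|x-z\|\ge r_\delta/5\ \forall z\in\bigcup_jB_j\}$. Also $\mathcal E_1:=\inf\{t\ge0:s_i(t)\ne s_i(0)\}$ and $\mathcal E_2:=\inf\{t\ge\mathcal E_1:s_i(t)\ne s_i(\mathcal E_1)\}-\mathcal E_1$. *)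

theory Defs
  imports "HOL-Analysis.Analysis"
begin

text \<open>The plane is modelled by the type complex (a 2-dimensional real inner product space).\<close>

text \<open>g 0 is a C-infinity, 1-periodic, regular parametrisation of a closed curve; g k is its k-th derivative.\<close>
definition smooth_closed_param :: "(nat \<Rightarrow> real \<Rightarrow> complex) \<Rightarrow> bool" where
  "smooth_closed_param g \<longleftrightarrow>
     (\<forall>k t. (g k has_vector_derivative g (Suc k) t) (at t)) \<and>
     (\<forall>t. g 0 (t + 1) = g 0 t) \<and>
     inj_on (g 0) {0..<1} \<and>
     (\<forall>t. g 1 t \<noteq> 0)"

definition smooth_jordan :: "complex set \<Rightarrow> (nat \<Rightarrow> real \<Rightarrow> complex) \<Rightarrow> bool" where
  "smooth_jordan B g \<longleftrightarrow> smooth_closed_param g \<and> B = g 0 ` {0..1}"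

definition curv :: "(nat \<Rightarrow> real \<Rightarrow> complex) \<Rightarrow> real \<Rightarrow> real" where
  "curv g t = \<bar>Im (cnj (g 1 t) * g 2 t)\<bar> / norm (g 1 t) ^ 3"

definition pos_side :: "complex set \<Rightarrow> complex set" where
  "pos_side B = closure (inside B)"

definition neg_side :: "complex set \<Rightarrow> complex set" where
  "neg_side B = closure (outside B)"

definition inward_normal :: "(nat \<Rightarrow> real \<Rightarrow> complex) \<Rightarrow> complex set \<Rightarrow> complex \<Rightarrow> complex" where
  "inward_normal g B p = (THE v. norm v = 1 \<and> (\<forall>t. g 0 t = p \<longrightarrow> v \<bullet> g 1 t = 0) \<and>
      (\<exists>e>0. \<forall>h. 0 < h \<and> h < e \<longrightarrow> p + h *\<^sub>R v \<in> inside B))"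

definition cadlag :: "(real \<Rightarrow> real) \<Rightarrow> bool" where
  "cadlag f \<longleftrightarrow> (\<forall>t\<ge>0. continuous (at_right t) f) \<and> (\<forall>t>0. \<exists>l. (f \<longlongrightarrow> l) (at_left t))"

definition kappa_max :: "nat \<Rightarrow> (nat \<Rightarrow> nat \<Rightarrow> real \<Rightarrow> complex) \<Rightarrow> real" where
  "kappa_max m g = Sup {curv (g j) t | j t. j \<le> m \<and> t \<in> {0..1}}"

definition lambda_max :: "nat \<Rightarrow> (nat \<Rightarrow> real) \<Rightarrow> (nat \<Rightarrow> real) \<Rightarrow> real" where
  "lambda_max m lp lm = Max (lp ` {1..m} \<union> lm ` {1..m})"

definition rho_const :: "complex set \<Rightarrow> nat \<Rightarrow> (nat \<Rightarrow> complex set) \<Rightarrow> real" where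
  "rho_const D m B = Sup {r. r \<ge> 0 \<and> (\<forall>r'\<in>{0..r}. \<forall>x\<in>D. connected (ball x r' \<inter> (\<Union>j\<le>m. B j)))}"

definition r_delta :: "real \<Rightarrow> complex set \<Rightarrow> nat \<Rightarrow> (nat \<Rightarrow> complex set) \<Rightarrow>
    (nat \<Rightarrow> nat \<Rightarrow> real \<Rightarrow> complex) \<Rightarrow> (nat \<Rightarrow> real) \<Rightarrow> (nat \<Rightarrow> real) \<Rightarrow> real" where
  "r_delta \<delta> D m B g lp lm = \<delta> * min (min (1 / kappa_max m g) (1 / lambda_max m lp lm)) (rho_const D m B)"

definition D_delta :: "real \<Rightarrow> complex set \<Rightarrow> nat \<Rightarrow> (nat \<Rightarrow> complex set) \<Rightarrow>
    (nat \<Rightarrow> nat \<Rightarrow> real \<Rightarrow> complex) \<Rightarrow> (nat \<Rightarrow> real) \<Rightarrow> (nat \<Rightarrow> real) \<Rightarrow> complex set" where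
  "D_delta \<delta> D m B g lp lm = {x \<in> D. \<forall>z \<in> (\<Union>j\<le>m. B j). dist x z \<ge> r_delta \<delta> D m B g lp lm / 5}"

text \<open>first and second holding times of a jump path (infimum of the empty set is +infinity)\<close>
definition E1 :: "(real \<Rightarrow> real) \<Rightarrow> ereal" where
  "E1 s = Inf (ereal ` {t. 0 \<le> t \<and> s t \<noteq> s 0})"

definition E2 :: "(real \<Rightarrow> real) \<Rightarrow> ereal" where
  "E2 s = (let e = real_of_ereal (E1 s) in Inf (ereal ` {t. e \<le> t \<and> s t \<noteq> s e}) - ereal e)"

definition LS :: "(real \<Rightarrow> real) \<Rightarrow> real measure" where
  "LS L = interval_measure (\<lambda>r. L (max 0 r))"

text \<open>Pathwise conditions (i)-(iii) of a snapping-out Brownian motion with driving path W,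
  chain paths s, started at x0.\<close>
definition snapping_out_path ::
  "complex set \<Rightarrow> nat \<Rightarrow> (nat \<Rightarrow> complex set) \<Rightarrow> (nat \<Rightarrow> nat \<Rightarrow> real \<Rightarrow> complex) \<Rightarrow>
   (nat \<Rightarrow> real \<Rightarrow> real) \<Rightarrow> (real \<Rightarrow> complex) \<Rightarrow> complex \<Rightarrow>
   (real \<Rightarrow> complex) \<Rightarrow> (nat \<Rightarrow> real \<Rightarrow> real) \<Rightarrow> bool" where
  "snapping_out_path D m B g s W x0 X L \<longleftrightarrow>
     continuous_on {0..} X \<and> (\<forall>t\<ge>0. X t \<in> D) \<and> X 0 = x0 \<and>
     (\<forall>j\<le>m. continuous_on {0..} (L j) \<and> mono_on {0..} (L j) \<and> L j 0 = 0 \<and>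
        (\<forall>t\<ge>0. L j t = measure (LS (L j)) {r \<in> {0..t}. X r \<in> B j})) \<and>
     (\<forall>t\<ge>0. \<forall>j\<le>m. set_integrable (LS (L j)) {0..t}
                 (\<lambda>r. (s j (L j r) * indicator (B j) (X r)) *\<^sub>R inward_normal (g j) (B j) (X r))) \<and>
     (\<forall>t\<ge>0. X t = x0 + W t + (\<Sum>j\<le>m. LINT r:{0..t}|LS (L j).
                 (s j (L j r) * indicator (B j) (X r)) *\<^sub>R inward_normal (g j) (B j) (X r))) \<and>
     (\<forall>t\<ge>0. \<forall>j\<le>m. (s j (L j t) = 1 \<longrightarrow> X t \<in> pos_side (B j)) \<and>
                     (s j (L j t) = -1 \<longrightarrow> X t \<in> neg_side (B j)))"

end

theory Submission
  imports Defs
begin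


lemma scp_der0: "smooth_closed_param g \<Longrightarrow> (g 0 has_vector_derivative g 1 t) (at t)"
  unfolding smooth_closed_param_def by (metis One_nat_def)

lemma scp_der1: "smooth_closed_param g \<Longrightarrow> (g 1 has_vector_derivative g 2 t) (at t)"
  unfolding smooth_closed_param_def by (metis One_nat_def Suc_1)

lemma scp_cont0: "smooth_closed_param g \<Longrightarrow> continuous_on S (g 0)"
  by (meson continuous_at_imp_continuous_on has_vector_derivative_continuous scp_der0)

lemma scp_cont1: "smooth_closed_param g \<Longrightarrow> continuous_on S (g 1)"
  by (meson continuous_at_imp_continuous_on has_vector_derivative_continuous scp_der1)

lemma scp_p: "smooth_closed_param g \<Longrightarrow> g 0 (t + 1) = g 0 t"
  unfolding smooth_closed_param_def by simp

lemma scp_inj: "smooth_closed_param g \<Longrightarrow> inj_on (g 0) {0..<1}"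
  unfolding smooth_closed_param_def by simp

lemma scp_per_nat: "smooth_closed_param g \<Longrightarrow> g 0 (t + real n) = g 0 t"
proof (induction n)
  case 0 then show ?case by simp
next
  case (Suc n)
  have "g 0 (t + real (Suc n)) = g 0 ((t + real n) + 1)" by (simp add: algebra_simps)
  also have "\<dots> = g 0 (t + real n)" using Suc.prems by (rule scp_p)
  finally show ?case using Suc by simp
qed

lemma scp_per_int: "smooth_closed_param g \<Longrightarrow> g 0 (t + real_of_int k) = g 0 t"
proof (cases "k \<ge> 0")
  case True
  assume g: "smooth_closed_param g"
  obtain n where "k = int n" using True nonneg_int_cases by blast
  then show ?thesis using scp_per_nat[OF g, of t n] by simp
next
  case False
  assume g: "smooth_closed_param g"
  define n where "n = nat (-k)"
  have n: "k = - int n" using False unfolding n_def by simp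
  have "g 0 ((t + real_of_int k) + real n) = g 0 (t + real_of_int k)" by (rule scp_per_nat[OF g])
  then show ?thesis using n by simp
qed

lemma scp_per1: "smooth_closed_param g \<Longrightarrow> g 1 (t + 1) = g 1 t"
proof -
  assume g: "smooth_closed_param g"
  have "((\<lambda>s. g 0 (s + 1)) has_vector_derivative g 1 (t + 1)) (at t)"
  proof -
    have d1: "((\<lambda>s. s + 1) has_vector_derivative 1) (at t)"
      by (rule derivative_eq_intros | simp)+
    show ?thesis
      using vector_diff_chain_at[OF d1 scp_der0[OF g, of "t+1"]] by (simp add: o_def)
  qed
  moreover have "(\<lambda>s. g 0 (s + 1)) = g 0" using scp_p[OF g] by auto
  ultimately have "(g 0 has_vector_derivative g 1 (t + 1)) (at t)" by simp
  then show ?thesis using scp_der0[OF g] vector_derivative_unique_at by blast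
qed

lemma scp_per1_int: "smooth_closed_param g \<Longrightarrow> g 1 (t + real_of_int k) = g 1 t"
proof -
  assume g: "smooth_closed_param g"
  have n: "g 1 (t + real n) = g 1 t" for t n
  proof (induction n)
    case (Suc n)
    have "g 1 (t + real (Suc n)) = g 1 ((t + real n) + 1)" by (simp add: algebra_simps)
    then show ?case using Suc scp_per1[OF g] by simp
  qed simp
  show ?thesis
  proof (cases "k \<ge> 0")
    case True
    obtain n where "k = int n" using True nonneg_int_cases by blast
    then show ?thesis using n[of t n] by simp
  next
    case False
    define n' where "n' = nat (-k)"
    have n': "k = - int n'" using False unfolding n'_def by simp
    have "g 1 ((t + real_of_int k) + real n') = g 1 (t + real_of_int k)" by (rule n)
    then show ?thesis using n' by simp
  qed
qed

lemma scp_eq_int: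
  assumes g: "smooth_closed_param g" and eq: "g 0 s = g 0 t"
  shows "\<exists>k::int. s = t + real_of_int k"
proof -
  define s' where "s' = s - real_of_int (floor s)"
  define t' where "t' = t - real_of_int (floor t)"
  have s'r: "s' \<in> {0..<1}" unfolding s'_def by (simp add: floor_le_iff) linarith
  have t'r: "t' \<in> {0..<1}" unfolding t'_def by (simp add: floor_le_iff) linarith
  have "g 0 s' = g 0 s" unfolding s'_def using scp_per_int[OF g, of "s - real_of_int (floor s)" "floor s"] by simp
  moreover have "g 0 t' = g 0 t" unfolding t'_def using scp_per_int[OF g, of "t - real_of_int (floor t)" "floor t"] by simp
  ultimately have "g 0 s' = g 0 t'" using eq by simp
  then have "s' = t'" using scp_inj[OF g] s'r t'r unfolding inj_on_def by blast
  then have "s = t + real_of_int (floor s - floor t)" unfolding s'_def t'_def by simp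
  then show ?thesis by blast
qed

lemma scp_eq_der:
  assumes g: "smooth_closed_param g" and eq: "g 0 s = g 0 t"
  shows "g 1 s = g 1 t"
  using scp_eq_int[OF g eq] scp_per1_int[OF g] by auto

lemma scp_simple:
  assumes g: "smooth_closed_param g"
  shows "simple_path (g 0)" "pathfinish (g 0) = pathstart (g 0)"
proof -
  show pf: "pathfinish (g 0) = pathstart (g 0)"
    using scp_p[OF g, of 0] unfolding pathfinish_def pathstart_def by simp
  have "path (g 0)" unfolding path_def using scp_cont0[OF g] .
  moreover have "loop_free (g 0)"
    unfolding loop_free_def
  proof (intro ballI impI)
    fix x y assume x: "x \<in> {0..1}" and y: "y \<in> {0..1}" and e: "g 0 x = g 0 y"
    obtain k::int where k: "x = y + k" using scp_eq_int[OF g e] by blast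
    have "real_of_int k \<le> 1" "real_of_int k \<ge> -1" using x y k by auto
    then have "k = -1 \<or> k = 0 \<or> k = 1" by linarith
    then show "x = y \<or> x = 0 \<and> y = 1 \<or> x = 1 \<and> y = 0"
    proof (elim disjE)
      assume "k = -1" then show ?thesis using x y k by simp
    next
      assume "k = 0" then show ?thesis using x y k by simp
    next
      assume "k = 1" then show ?thesis using x y k by simp
    qed
  qed
  ultimately show "simple_path (g 0)" unfolding simple_path_def by blast
qed



lemma scp_range_shift:
  assumes g: "smooth_closed_param g"
  shows "range (g 0) = g 0 ` {c..c+1}"
proof
  show "range (g 0) \<subseteq> g 0 ` {c..c+1}"
  proof
    fix z assume "z \<in> range (g 0)"
    then obtain s where s: "z = g 0 s" by blast
    define s' where "s' = s - real_of_int (floor (s - c))"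
    have "s' \<in> {c..c+1}" unfolding s'_def by (simp add: floor_le_iff) linarith
    moreover have "g 0 s' = g 0 s" unfolding s'_def
      using scp_per_int[OF g, of "s - real_of_int (floor (s - c))" "floor (s - c)"] by simp
    ultimately show "z \<in> g 0 ` {c..c+1}" using s by (metis image_eqI)
  qed
qed auto

lemma scp_range:
  assumes g: "smooth_closed_param g"
  shows "g 0 ` {0..1} = range (g 0)"
  using scp_range_shift[OF g, of 0] by simp

lemma scp_lin:
  assumes g: "smooth_closed_param g"
    and K: "\<And>x. x \<in> {c..d} \<Longrightarrow> norm (g 1 x - g 1 t0) \<le> K"
    and t0: "t0 \<in> {c..d}" and t1: "t1 \<in> {c..d}" and t2: "t2 \<in> {c..d}"
  shows "norm (g 0 t2 - g 0 t1 - (t2 - t1) *\<^sub>R g 1 t0) \<le> \<bar>t2 - t1\<bar> * K"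
proof -
  have K0: "0 \<le> K" using K[OF t0] by simp
  have cv: "convex {c..d}" by simp
  have "norm (g 0 t2 - g 0 t1 - (\<lambda>h. h *\<^sub>R g 1 t0) (t2 - t1)) \<le> norm (t2 - t1) * K"
  proof (rule differentiable_bound_linearization[where S="{c..d}" and f="g 0" and f'="\<lambda>x h. h *\<^sub>R g 1 x"])
    fix t :: real assume "t \<in> {0..1}"
    then have "0 \<le> t" "t \<le> 1" by auto
    then have "(1 - t) *\<^sub>R t1 + t *\<^sub>R t2 \<in> {c..d}" using cv t1 t2 unfolding convex_alt by blast
    moreover have "(1 - t) *\<^sub>R t1 + t *\<^sub>R t2 = t1 + t *\<^sub>R (t2 - t1)" by (simp add: algebra_simps)
    ultimately show "t1 + t *\<^sub>R (t2 - t1) \<in> {c..d}" by simp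
  next
    fix x assume "x \<in> {c..d}"
    show "(g 0 has_derivative (\<lambda>h. h *\<^sub>R g 1 x)) (at x within {c..d})"
      using scp_der0[OF g, of x] unfolding has_vector_derivative_def
      by (rule has_derivative_at_withinI)
  next
    fix x assume x: "x \<in> {c..d}"
    show "onorm ((\<lambda>h. h *\<^sub>R g 1 x) - (\<lambda>h. h *\<^sub>R g 1 t0)) \<le> K"
    proof (rule onorm_bound[OF K0])
      fix h :: real
      have "norm (((\<lambda>h. h *\<^sub>R g 1 x) - (\<lambda>h. h *\<^sub>R g 1 t0)) h) = \<bar>h\<bar> * norm (g 1 x - g 1 t0)"
        by (simp add: scaleR_diff_right[symmetric])
      also have "\<dots> \<le> \<bar>h\<bar> * K" using K[OF x] by (simp add: mult_left_mono)
      finally show "norm (((\<lambda>h. h *\<^sub>R g 1 x) - (\<lambda>h. h *\<^sub>R g 1 t0)) h) \<le> K * norm h" by (simp add: mult.commute)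
    qed
  qed (use t0 in auto)
  then show ?thesis by simp
qed



lemma local_structure:
  fixes t0 :: real
  assumes g: "smooth_closed_param g"
  assumes p_def: "p = g 0 t0" and a_def: "a = g 1 t0"
  assumes e_def: "e = a / complex_of_real (norm a)"
  assumes F_def: "F = (\<lambda>t. cnj e * (g 0 t - p))"
  obtains \<eta> \<rho>0 where "0 < \<eta>" "\<eta> \<le> 1/4" "0 < \<rho>0"
    "\<And>t1 t2. t1 \<in> {t0-\<eta>..t0+\<eta>} \<Longrightarrow> t2 \<in> {t0-\<eta>..t0+\<eta>} \<Longrightarrow> t1 < t2 \<Longrightarrow> Re (F t1) < Re (F t2)"
    "\<And>t. t \<in> {t0-\<eta>..t0+\<eta>} \<Longrightarrow> 3 * \<bar>Im (F t)\<bar> \<le> \<bar>Re (F t)\<bar>"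
    "\<And>\<tau>. \<bar>\<tau>\<bar> < \<rho>0 \<Longrightarrow> \<exists>t\<in>{t0-\<eta>..t0+\<eta>}. Re (F t) = \<tau>"
    "\<And>z. z \<in> range (g 0) \<Longrightarrow> dist p z < \<rho>0 \<Longrightarrow> \<exists>t\<in>{t0-\<eta>..t0+\<eta>}. z = g 0 t"
proof -
  define na where "na = norm a"
  have a0: "a \<noteq> 0" using g unfolding smooth_closed_param_def a_def by blast
  have na0: "na > 0" using a0 unfolding na_def by simp
  have cont1: "continuous (at t0) (g 1)"
    using scp_cont1[OF g, of UNIV] by (simp add: continuous_on_eq_continuous_at)
  obtain d where d: "d > 0" "\<And>x. dist x t0 < d \<Longrightarrow> dist (g 1 x) (g 1 t0) < na / 4"
  proof -
    have "na / 4 > 0" using na0 by simp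
    then show ?thesis using cont1 that unfolding continuous_at_eps_delta by blast
  qed
  define \<eta> where "\<eta> = min (d/2) (1/4)"
  have eta: "0 < \<eta>" "\<eta> \<le> 1/4" "\<eta> < d" using d(1) unfolding \<eta>_def by auto
  define I where "I = {t0-\<eta>..t0+\<eta>}"
  have t0I: "t0 \<in> I" using eta unfolding I_def by auto
  have K: "norm (g 1 x - g 1 t0) \<le> na / 4" if "x \<in> I" for x
  proof -
    have "dist x t0 < d" using that eta unfolding I_def dist_real_def by auto
    then have "dist (g 1 x) (g 1 t0) < na / 4" by (rule d(2))
    then show ?thesis by (simp add: dist_norm)
  qed
  have lin: "norm (g 0 t2 - g 0 t1 - (t2 - t1) *\<^sub>R a) \<le> \<bar>t2 - t1\<bar> * (na / 4)"
    if "t1 \<in> I" "t2 \<in> I" for t1 t2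
    unfolding a_def
  proof (rule scp_lin[OF g])
    show "\<And>x. x \<in> {t0-\<eta>..t0+\<eta>} \<Longrightarrow> norm (g 1 x - g 1 t0) \<le> na / 4" using K unfolding I_def a_def by simp
  qed (use t0I that in \<open>simp_all add: I_def\<close>)
  have ce_a: "cnj e * a = complex_of_real na"
  proof -
    have "cnj e * a = cnj a * a / complex_of_real na" unfolding e_def na_def by (simp add: field_simps)
    also have "cnj a * a = complex_of_real (na^2)" unfolding na_def
      by (metis complex_norm_square mult.commute)
    finally show ?thesis using na0 by (simp add: power2_eq_square)
  qed
  have ne: "norm (cnj e) = 1" unfolding e_def using a0 by (simp add: norm_divide)
  have linF: "norm (F t2 - F t1 - complex_of_real ((t2 - t1) * na)) \<le> \<bar>t2 - t1\<bar> * (na / 4)"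
    if "t1 \<in> I" "t2 \<in> I" for t1 t2
  proof -
    have "F t2 - F t1 - complex_of_real ((t2 - t1) * na) = cnj e * (g 0 t2 - g 0 t1 - (t2 - t1) *\<^sub>R a)"
    proof -
      have "cnj e * ((t2 - t1) *\<^sub>R a) = (t2 - t1) *\<^sub>R (cnj e * a)" by (rule mult_scaleR_right)
      also have "\<dots> = complex_of_real ((t2 - t1) * na)" using ce_a by (simp add: scaleR_conv_of_real)
      finally show ?thesis unfolding F_def by (simp add: right_diff_distrib)
    qed
    then have "norm (F t2 - F t1 - complex_of_real ((t2 - t1) * na)) = norm (g 0 t2 - g 0 t1 - (t2 - t1) *\<^sub>R a)"
      using ne by (simp add: norm_mult)
    then show ?thesis using lin[OF that] by simp
  qed
  have reF: "\<bar>Re (F t2) - Re (F t1) - (t2 - t1) * na\<bar> \<le> \<bar>t2 - t1\<bar> * (na / 4)"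
    and imF: "\<bar>Im (F t2) - Im (F t1)\<bar> \<le> \<bar>t2 - t1\<bar> * (na / 4)"
    if "t1 \<in> I" "t2 \<in> I" for t1 t2
  proof -
    have "\<bar>Re (F t2 - F t1 - complex_of_real ((t2 - t1) * na))\<bar> \<le> \<bar>t2 - t1\<bar> * (na / 4)"
      using abs_Re_le_cmod linF[OF that] order_trans by blast
    then show "\<bar>Re (F t2) - Re (F t1) - (t2 - t1) * na\<bar> \<le> \<bar>t2 - t1\<bar> * (na / 4)" by simp
    have "\<bar>Im (F t2 - F t1 - complex_of_real ((t2 - t1) * na))\<bar> \<le> \<bar>t2 - t1\<bar> * (na / 4)"
      using abs_Im_le_cmod linF[OF that] order_trans by blast
    then show "\<bar>Im (F t2) - Im (F t1)\<bar> \<le> \<bar>t2 - t1\<bar> * (na / 4)" by simp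
  qed
  have F0: "F t0 = 0" unfolding F_def p_def by simp
  have mono: "Re (F t1) < Re (F t2)" if "t1 \<in> I" "t2 \<in> I" "t1 < t2" for t1 t2
  proof -
    have "\<bar>Re (F t2) - Re (F t1) - (t2 - t1) * na\<bar> \<le> (t2 - t1) * (na / 4)"
      using reF[OF that(1,2)] that(3) by simp
    moreover have "(t2 - t1) * (na / 4) < (t2 - t1) * na" using that(3) na0 by simp
    ultimately show ?thesis by linarith
  qed
  have cone: "3 * \<bar>Im (F t)\<bar> \<le> \<bar>Re (F t)\<bar>" and big: "\<bar>Re (F t)\<bar> \<ge> 3/4 * na * \<bar>t - t0\<bar>"
    if "t \<in> I" for t
  proof -
    have r: "\<bar>Re (F t) - (t - t0) * na\<bar> \<le> \<bar>t - t0\<bar> * (na / 4)" using reF[OF t0I that] F0 by simp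
    have i: "\<bar>Im (F t)\<bar> \<le> \<bar>t - t0\<bar> * (na / 4)" using imF[OF t0I that] F0 by simp
    have "\<bar>(t - t0) * na\<bar> = \<bar>t - t0\<bar> * na" using na0 by (simp add: abs_mult)
    moreover have "3/4 * na * \<bar>t - t0\<bar> = 3/4 * (\<bar>t - t0\<bar> * na)" "\<bar>t - t0\<bar> * (na / 4) = (\<bar>t - t0\<bar> * na) / 4" by simp_all
    ultimately show "\<bar>Re (F t)\<bar> \<ge> 3/4 * na * \<bar>t - t0\<bar>" using r i by linarith
    moreover have "3/4 * na * \<bar>t - t0\<bar> = 3 * (\<bar>t - t0\<bar> * (na / 4))" by simp
    ultimately show "3 * \<bar>Im (F t)\<bar> \<le> \<bar>Re (F t)\<bar>" using i by linarith
  qed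
  define M where "M = 3/4 * na * \<eta>"
  have M0: "M > 0" unfolding M_def using na0 eta by simp
  have Mr: "Re (F (t0 + \<eta>)) \<ge> M"
  proof -
    have "t0 + \<eta> \<in> I" unfolding I_def using eta by auto
    then have "Re (F t0) < Re (F (t0 + \<eta>))" using mono t0I eta by auto
    then show ?thesis using big[OF \<open>t0 + \<eta> \<in> I\<close>] F0 eta unfolding M_def by simp
  qed
  have Ml: "Re (F (t0 - \<eta>)) \<le> - M"
  proof -
    have "t0 - \<eta> \<in> I" unfolding I_def using eta by auto
    then have "Re (F (t0 - \<eta>)) < Re (F t0)" using mono t0I eta by auto
    then show ?thesis using big[OF \<open>t0 - \<eta> \<in> I\<close>] F0 eta unfolding M_def by simp
  qed
  have contReF: "continuous_on I (\<lambda>t. Re (F t))"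
    unfolding F_def using scp_cont0[OF g] by (intro continuous_intros) auto
  have ivt: "\<exists>t\<in>I. Re (F t) = \<tau>" if "\<bar>\<tau>\<bar> < M" for \<tau>
  proof -
    have "\<exists>t. t0 - \<eta> \<le> t \<and> t \<le> t0 + \<eta> \<and> Re (F t) = \<tau>"
      using IVT'[of "\<lambda>t. Re (F t)" "t0 - \<eta>" \<tau> "t0 + \<eta>"] Mr Ml that eta contReF unfolding I_def by auto
    then show ?thesis unfolding I_def by auto
  qed
  define A where "A = g 0 ` {t0+\<eta>..t0+1-\<eta>}"
  have cA: "closed A" unfolding A_def
    by (intro compact_imp_closed compact_continuous_image scp_cont0[OF g] compact_Icc)
  have pA: "p \<notin> A"
  proof
    assume "p \<in> A"
    then obtain s where s: "s \<in> {t0+\<eta>..t0+1-\<eta>}" "g 0 s = g 0 t0" unfolding A_def p_def by auto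
    obtain k :: int where k: "s = t0 + k" using scp_eq_int[OF g s(2)] by blast
    have "real_of_int k > 0" "real_of_int k < 1" using s(1) k eta by auto
    then have "k > 0" "k < 1" by simp_all
    then show False by simp
  qed
  obtain \<rho>1 where r1: "\<rho>1 > 0" "\<And>x. x \<in> A \<Longrightarrow> \<rho>1 \<le> dist p x"
    using separate_point_closed[OF cA pA] by blast
  have near: "\<exists>t\<in>I. z = g 0 t" if "z \<in> range (g 0)" "dist p z < \<rho>1" for z
  proof -
    have "z \<in> g 0 ` {t0-\<eta>..t0-\<eta>+1}" using that scp_range_shift[OF g, of "t0-\<eta>"] by auto
    then obtain s where s: "s \<in> {t0-\<eta>..t0-\<eta>+1}" "z = g 0 s" by auto
    show ?thesis
    proof (cases "s \<le> t0 + \<eta>")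
      case True then show ?thesis using s unfolding I_def by auto
    next
      case False
      then have "z \<in> A" using s unfolding A_def by auto
      then show ?thesis using r1(2) that(2) by force
    qed
  qed
  show ?thesis
  proof (rule that[of \<eta> "min M \<rho>1"])
    show "0 < \<eta>" "\<eta> \<le> 1/4" using eta by auto
    show "0 < min M \<rho>1" using M0 r1 by simp
  next
    fix t1 t2 assume "t1 \<in> {t0-\<eta>..t0+\<eta>}" "t2 \<in> {t0-\<eta>..t0+\<eta>}" "t1 < t2"
    then show "Re (F t1) < Re (F t2)" using mono unfolding I_def by blast
  next
    fix t assume "t \<in> {t0-\<eta>..t0+\<eta>}" then show "3 * \<bar>Im (F t)\<bar> \<le> \<bar>Re (F t)\<bar>" using cone unfolding I_def by blast
  next
    fix \<tau> :: real assume "\<bar>\<tau>\<bar> < min M \<rho>1" then show "\<exists>t\<in>{t0-\<eta>..t0+\<eta>}. Re (F t) = \<tau>"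
      using ivt unfolding I_def by auto
  next
    fix z assume "z \<in> range (g 0)" "dist p z < min M \<rho>1"
    then show "\<exists>t\<in>{t0-\<eta>..t0+\<eta>}. z = g 0 t" using near unfolding I_def by auto
  qed
qed



lemma conn_side:
  fixes B :: "'a::real_normed_vector set"
  assumes "connected S" "S \<inter> B = {}" "x \<in> S"
  shows "(x \<in> inside B \<longrightarrow> S \<subseteq> inside B) \<and> (x \<in> outside B \<longrightarrow> S \<subseteq> outside B)"
proof -
  have cc: "connected_component (- B) x y" if "y \<in> S" for y
    using connected_componentI[OF assms(1) _ assms(3) that] assms(2) by blast
  show ?thesis using cc inside_same_component outside_same_component by blast
qed

lemma conn_side2:
  fixes B :: "'a::real_normed_vector set"
  assumes "connected S" "S \<inter> B = {}" "S \<noteq> {}"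
  shows "S \<subseteq> inside B \<or> S \<subseteq> outside B"
proof -
  obtain x where x: "x \<in> S" using assms(3) by blast
  then have "x \<in> inside B \<union> outside B" using assms(2) inside_Un_outside by blast
  then show ?thesis using conn_side[OF assms(1,2) x] by blast
qed

lemma K_convex: "convex {w::complex. norm w < r \<and> \<bar>Re w\<bar> < Im w}"
proof -
  have "{w::complex. norm w < r \<and> \<bar>Re w\<bar> < Im w} =
        ball 0 r \<inter> {w. inner (Complex 1 (-1)) w < 0} \<inter> {w. inner (Complex (-1) (-1)) w < 0}"
    by (auto simp: inner_complex_def)
  then show ?thesis by (simp add: convex_Int convex_halfspace_lt)
qed

lemma K_convex2: "convex {w::complex. norm w < r \<and> Im w < - \<bar>Re w\<bar>}"
proof -
  have "{w::complex. norm w < r \<and> Im w < - \<bar>Re w\<bar>} =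
        ball 0 r \<inter> {w. inner (Complex 1 1) w < 0} \<inter> {w. inner (Complex (-1) 1) w < 0}"
    by (auto simp: inner_complex_def)
  then show ?thesis by (simp add: convex_Int convex_halfspace_lt)
qed

lemma affine_W:
  fixes e p x y :: complex and u :: real
  shows "cnj e * ((1 - u) *\<^sub>R x + u *\<^sub>R y - p) = (1 - u) *\<^sub>R (cnj e * (x - p)) + u *\<^sub>R (cnj e * (y - p))"
  by (simp add: scaleR_conv_of_real algebra_simps)

lemma normal_unit:
  assumes g: "smooth_closed_param g" and pB: "p \<in> g 0 ` {0..1}"
  shows "norm (inward_normal g (g 0 ` {0..1}) p) = 1"
proof -
  define B where "B = g 0 ` {0..1}"
  have Br: "B = range (g 0)" unfolding B_def using scp_range[OF g] .
  obtain t0 where p: "p = g 0 t0" using pB by auto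
  have pi: "path_image (g 0) = B" unfolding B_def path_image_def by simp
  have J: "open (inside B)" "open (outside B)" "frontier (inside B) = B" "frontier (outside B) = B"
    using Jordan_inside_outside[OF scp_simple[OF g]] unfolding pi by auto
  have io: "inside B \<inter> outside B = {}" by (rule inside_Int_outside)
  have iB: "inside B \<inter> B = {}" "outside B \<inter> B = {}" by auto
  define a where "a = g 1 t0"
  define e where "e = a / complex_of_real (norm a)"
  define W where "W = (\<lambda>z. cnj e * (z - p))"
  define F where "F = (\<lambda>t. cnj e * (g 0 t - p))"
  have FW: "F t = W (g 0 t)" for t unfolding F_def W_def by simp
  have a0: "a \<noteq> 0" using g unfolding smooth_closed_param_def a_def by blast
  have ne: "norm e = 1" unfolding e_def using a0 by (simp add: norm_divide)
  have ecnj: "e * cnj e = 1"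
    using complex_norm_square[of e] ne by simp
  have Winv: "z = p + e * W z" for z
  proof -
    have "e * W z = (e * cnj e) * (z - p)" unfolding W_def by (simp add: algebra_simps)
    then show ?thesis using ecnj by simp
  qed
  have Wnorm: "norm (W z) = dist p z" for z
    unfolding W_def using ne by (simp add: norm_mult dist_norm norm_minus_commute)
  obtain \<eta> \<rho>0 where
    eta: "0 < \<eta>" "\<eta> \<le> 1/4" and r0: "0 < \<rho>0" and
    mono: "\<And>t1 t2. t1 \<in> {t0-\<eta>..t0+\<eta>} \<Longrightarrow> t2 \<in> {t0-\<eta>..t0+\<eta>} \<Longrightarrow> t1 < t2 \<Longrightarrow> Re (F t1) < Re (F t2)" and
    cone: "\<And>t. t \<in> {t0-\<eta>..t0+\<eta>} \<Longrightarrow> 3 * \<bar>Im (F t)\<bar> \<le> \<bar>Re (F t)\<bar>" and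
    ivt: "\<And>\<tau>. \<bar>\<tau>\<bar> < \<rho>0 \<Longrightarrow> \<exists>t\<in>{t0-\<eta>..t0+\<eta>}. Re (F t) = \<tau>" and
    near: "\<And>z. z \<in> range (g 0) \<Longrightarrow> dist p z < \<rho>0 \<Longrightarrow> \<exists>t\<in>{t0-\<eta>..t0+\<eta>}. z = g 0 t"
    using local_structure[OF g p a_def e_def F_def] by blast
  define J where "J = {t0-\<eta>..t0+\<eta>}"
  have inj: "t1 = t2" if "t1 \<in> J" "t2 \<in> J" "Re (F t1) = Re (F t2)" for t1 t2
    using mono[of t1 t2] mono[of t2 t1] that unfolding J_def by (metis less_irrefl linorder_neqE_linordered_idom)
  define Cp where "Cp = {z. norm (W z) < \<rho>0 \<and> \<bar>Re (W z)\<bar> < Im (W z)}"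
  define Cm where "Cm = {z. norm (W z) < \<rho>0 \<and> Im (W z) < - \<bar>Re (W z)\<bar>}"
  have Wconv: "W ((1 - u) *\<^sub>R x + u *\<^sub>R y) = (1 - u) *\<^sub>R W x + u *\<^sub>R W y" for u x y
    unfolding W_def by (rule affine_W)
  have cvp: "convex Cp"
    unfolding convex_alt
  proof (intro ballI allI impI)
    fix x y and u :: real assume "x \<in> Cp" "y \<in> Cp" "0 \<le> u \<and> u \<le> 1"
    then have "(1 - u) *\<^sub>R W x + u *\<^sub>R W y \<in> {w. norm w < \<rho>0 \<and> \<bar>Re w\<bar> < Im w}"
      using K_convex[of \<rho>0] unfolding convex_alt Cp_def by blast
    then show "(1 - u) *\<^sub>R x + u *\<^sub>R y \<in> Cp" unfolding Cp_def using Wconv by simp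
  qed
  have cvm: "convex Cm"
    unfolding convex_alt
  proof (intro ballI allI impI)
    fix x y and u :: real assume "x \<in> Cm" "y \<in> Cm" "0 \<le> u \<and> u \<le> 1"
    then have "(1 - u) *\<^sub>R W x + u *\<^sub>R W y \<in> {w. norm w < \<rho>0 \<and> Im w < - \<bar>Re w\<bar>}"
      using K_convex2[of \<rho>0] unfolding convex_alt Cm_def by blast
    then show "(1 - u) *\<^sub>R x + u *\<^sub>R y \<in> Cm" unfolding Cm_def using Wconv by simp
  qed
  have onarc: "\<exists>t\<in>J. W z = F t" if zz: "z \<in> B" "norm (W z) < \<rho>0" for z
  proof -
    have "z \<in> range (g 0)" "dist p z < \<rho>0" using zz Br Wnorm by auto
    then obtain t where "t \<in> J" "z = g 0 t" using near[of z] unfolding J_def by blast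
    then show ?thesis using FW by auto
  qed
  have CpB: "Cp \<inter> B = {}"
  proof (rule ccontr)
    assume "Cp \<inter> B \<noteq> {}"
    then obtain z where z: "z \<in> Cp" "z \<in> B" by blast
    then obtain t where t: "t \<in> J" "W z = F t" using onarc unfolding Cp_def by blast
    have "3 * \<bar>Im (F t)\<bar> \<le> \<bar>Re (F t)\<bar>" using cone t(1) unfolding J_def by blast
    then show False using z(1) t(2) unfolding Cp_def by auto
  qed
  have CmB: "Cm \<inter> B = {}"
  proof (rule ccontr)
    assume "Cm \<inter> B \<noteq> {}"
    then obtain z where z: "z \<in> Cm" "z \<in> B" by blast
    then obtain t where t: "t \<in> J" "W z = F t" using onarc unfolding Cm_def by blast
    have "3 * \<bar>Im (F t)\<bar> \<le> \<bar>Re (F t)\<bar>" using cone t(1) unfolding J_def by blast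
    then show False using z(1) t(2) unfolding Cm_def by auto
  qed
  define u where "u = \<i> * e"
  have Wu: "W (p + h *\<^sub>R u) = Complex 0 h" for h
  proof -
    have "W (p + h *\<^sub>R u) = complex_of_real h * \<i> * (e * cnj e)"
      unfolding W_def u_def by (simp add: scaleR_conv_of_real algebra_simps)
    then show ?thesis using ecnj by (simp add: complex_eq_iff)
  qed
  have Wmu: "W (p + h *\<^sub>R (-u)) = Complex 0 (-h)" for h
    using Wu[of "-h"] by simp
  have upC: "p + h *\<^sub>R u \<in> Cp" if "0 < h" "h < \<rho>0" for h
    unfolding Cp_def using Wu that by (simp add: cmod_def)
  have umC: "p + h *\<^sub>R (-u) \<in> Cm" if "0 < h" "h < \<rho>0" for h
    unfolding Cm_def using Wmu that by (simp add: cmod_def)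
  have Cpne: "Cp \<noteq> {}" using upC[of "\<rho>0/2"] r0 by auto
  have Cmne: "Cm \<noteq> {}" using umC[of "\<rho>0/2"] r0 by auto
  have clp: "Cp \<subseteq> inside B \<or> Cp \<subseteq> outside B"
    using conn_side2[OF convex_connected[OF cvp] CpB Cpne] .
  have clm: "Cm \<subseteq> inside B \<or> Cm \<subseteq> outside B"
    using conn_side2[OF convex_connected[OF cvm] CmB Cmne] .
  have vert: "\<exists>S. connected S \<and> S \<inter> B = {} \<and> z \<in> S \<and> (S \<inter> Cp \<noteq> {} \<or> S \<inter> Cm \<noteq> {})"
    if z: "dist p z < \<rho>0 / 4" "z \<notin> B" for z
  proof -
    define \<tau> where "\<tau> = Re (W z)"
    define \<nu> where "\<nu> = Im (W z)"
    have nW: "norm (W z) < \<rho>0 / 4" using z Wnorm by simp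
    have tb: "\<bar>\<tau>\<bar> < \<rho>0 / 4" "\<bar>\<nu>\<bar> < \<rho>0 / 4" unfolding \<tau>_def \<nu>_def
      using abs_Re_le_cmod abs_Im_le_cmod nW by (blast intro: le_less_trans)+
    show ?thesis
    proof (cases "\<bar>\<tau>\<bar> < \<nu> \<or> \<nu> < - \<bar>\<tau>\<bar>")
      case True
      then have "z \<in> Cp \<or> z \<in> Cm" using nW r0 unfolding Cp_def Cm_def \<tau>_def \<nu>_def by auto
      then show ?thesis by (intro exI[of _ "{z}"]) (use z in auto)
    next
      case False
      then have nt: "\<bar>\<nu>\<bar> \<le> \<bar>\<tau>\<bar>" by auto
      have t0: "\<tau> \<noteq> 0"
      proof
        assume "\<tau> = 0"
        then have "\<nu> = 0" using nt by simp
        then have "W z = 0" using \<open>\<tau> = 0\<close> unfolding \<tau>_def \<nu>_def by (simp add: complex_eq_iff)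
        then have "z = p" using Winv[of z] by simp
        then show False using z(2) pB unfolding B_def by simp
      qed
      obtain t1 where t1: "t1 \<in> J" "Re (F t1) = \<tau>" using ivt[of \<tau>] tb r0 unfolding J_def by auto
      define \<nu>1 where "\<nu>1 = Im (F t1)"
      have c1: "3 * \<bar>\<nu>1\<bar> \<le> \<bar>\<tau>\<bar>" using cone[of t1] t1 unfolding \<nu>1_def J_def by auto
      have nn1: "\<nu> \<noteq> \<nu>1"
      proof
        assume "\<nu> = \<nu>1"
        then have "W z = F t1" using t1(2) unfolding \<tau>_def \<nu>_def \<nu>1_def by (simp add: complex_eq_iff)
        then have "W z = W (g 0 t1)" using FW by simp
        then have "z = g 0 t1" using Winv[of z] Winv[of "g 0 t1"] by simp
        then show False using z(2) Br by simp
      qed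
      define \<sigma> :: real where "\<sigma> = (if \<nu> > \<nu>1 then 1 else -1)"
      have sig: "\<sigma> * \<nu> > \<sigma> * \<nu>1" "\<bar>\<sigma>\<bar> = 1" using nn1 unfolding \<sigma>_def by auto
      define z' where "z' = p + e * Complex \<tau> (\<sigma> * 2 * \<bar>\<tau>\<bar>)"
      have Wz': "W z' = Complex \<tau> (\<sigma> * 2 * \<bar>\<tau>\<bar>)"
        unfolding z'_def W_def using ecnj by (simp add: algebra_simps)
      define S where "S = closed_segment z z'"
      have pts: "\<exists>v. W s = Complex \<tau> ((1 - v) * \<nu> + v * (\<sigma> * 2 * \<bar>\<tau>\<bar>)) \<and> 0 \<le> v \<and> v \<le> 1"
        if sS: "s \<in> S" for s
      proof -
        obtain v where v: "0 \<le> v" "v \<le> 1" "s = (1 - v) *\<^sub>R z + v *\<^sub>R z'"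
          using sS unfolding S_def closed_segment_def by auto
        have "W s = (1 - v) *\<^sub>R W z + v *\<^sub>R W z'" using v(3) Wconv by simp
        also have "\<dots> = Complex \<tau> ((1 - v) * \<nu> + v * (\<sigma> * 2 * \<bar>\<tau>\<bar>))"
          unfolding Wz' by (simp add: complex_eq_iff \<tau>_def \<nu>_def algebra_simps)
        finally show ?thesis using v by blast
      qed
      have SB: "S \<inter> B = {}"
      proof (rule ccontr)
        assume "S \<inter> B \<noteq> {}"
        then obtain s where s: "s \<in> S" "s \<in> B" by blast
        obtain v where v: "W s = Complex \<tau> ((1 - v) * \<nu> + v * (\<sigma> * 2 * \<bar>\<tau>\<bar>))" "0 \<le> v" "v \<le> 1"
          using pts[OF s(1)] by blast
        have "\<bar>(1 - v) * \<nu> + v * (\<sigma> * 2 * \<bar>\<tau>\<bar>)\<bar> \<le> (1 - v) * \<bar>\<tau>\<bar> + v * (2 * \<bar>\<tau>\<bar>)"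
        proof -
          have "\<bar>(1 - v) * \<nu>\<bar> \<le> (1 - v) * \<bar>\<tau>\<bar>" using nt v by (simp add: abs_mult mult_left_mono)
          moreover have "\<bar>v * (\<sigma> * 2 * \<bar>\<tau>\<bar>)\<bar> = v * (2 * \<bar>\<tau>\<bar>)" using sig(2) v by (simp add: abs_mult)
          moreover have "\<bar>(1 - v) * \<nu> + v * (\<sigma> * 2 * \<bar>\<tau>\<bar>)\<bar> \<le> \<bar>(1 - v) * \<nu>\<bar> + \<bar>v * (\<sigma> * 2 * \<bar>\<tau>\<bar>)\<bar>"
            by (rule abs_triangle_ineq)
          ultimately show ?thesis by linarith
        qed
        also have "\<dots> \<le> 2 * \<bar>\<tau>\<bar>"
        proof -
          have "(1 - v) * \<bar>\<tau>\<bar> \<le> (1 - v) * (2 * \<bar>\<tau>\<bar>)" using v by (intro mult_left_mono) auto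
          moreover have "(1 - v) * (2 * \<bar>\<tau>\<bar>) + v * (2 * \<bar>\<tau>\<bar>) = 2 * \<bar>\<tau>\<bar>" by (simp add: algebra_simps)
          ultimately show ?thesis by linarith
        qed
        finally have imb: "\<bar>Im (W s)\<bar> \<le> 2 * \<bar>\<tau>\<bar>" using v(1) by simp
        have "norm (W s) \<le> \<bar>Re (W s)\<bar> + \<bar>Im (W s)\<bar>" by (rule cmod_le)
        also have "\<dots> \<le> 3 * \<bar>\<tau>\<bar>" using imb v(1) by simp
        also have "\<dots> < \<rho>0" using tb by simp
        finally obtain t2 where t2: "t2 \<in> J" "W s = F t2" using onarc[OF s(2)] by blast
        have "Re (F t2) = Re (W s)" using t2(2) by simp
        also have "\<dots> = \<tau>" using v(1) by simp
        finally have "Re (F t2) = Re (F t1)" using t1(2) by simp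
        then have "t2 = t1" using inj t1(1) t2(1) by blast
        then have "Im (W s) = \<nu>1" using t2(2) unfolding \<nu>1_def by simp
        then have eqi: "(1 - v) * \<nu> + v * (\<sigma> * 2 * \<bar>\<tau>\<bar>) = \<nu>1" using v(1) by simp
        have a1: "\<sigma> * (\<sigma> * 2 * \<bar>\<tau>\<bar>) > \<sigma> * \<nu>1"
        proof -
          have "\<sigma> * \<sigma> = 1" using sig(2) abs_mult_self_eq[of \<sigma>] by simp
          moreover have "\<sigma> * (\<sigma> * 2 * \<bar>\<tau>\<bar>) = (\<sigma> * \<sigma>) * (2 * \<bar>\<tau>\<bar>)" by (simp add: algebra_simps)
          ultimately have "\<sigma> * (\<sigma> * 2 * \<bar>\<tau>\<bar>) = 2 * \<bar>\<tau>\<bar>" by simp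
          moreover have "\<sigma> * \<nu>1 \<le> \<bar>\<nu>1\<bar>"
          proof -
            have "\<sigma> * \<nu>1 \<le> \<bar>\<sigma> * \<nu>1\<bar>" by (rule abs_ge_self)
            also have "\<dots> = \<bar>\<nu>1\<bar>" using sig(2) by (simp add: abs_mult)
            finally show ?thesis .
          qed
          ultimately show ?thesis using c1 t0 by linarith
        qed
        have E1: "\<sigma> * ((1 - v) * \<nu> + v * (\<sigma> * 2 * \<bar>\<tau>\<bar>)) = (1 - v) * (\<sigma> * \<nu>) + v * (\<sigma> * (\<sigma> * 2 * \<bar>\<tau>\<bar>))"
          by (simp add: algebra_simps)
        have E2: "(1 - v) * (\<sigma> * \<nu>) + v * (\<sigma> * (\<sigma> * 2 * \<bar>\<tau>\<bar>)) > (1 - v) * (\<sigma> * \<nu>1) + v * (\<sigma> * \<nu>1)"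
        proof (cases "v = 1")
          case True then show ?thesis using a1 by simp
        next
          case False
          then have "(1 - v) * (\<sigma> * \<nu>) > (1 - v) * (\<sigma> * \<nu>1)" using v sig(1) by simp
          moreover have "v * (\<sigma> * (\<sigma> * 2 * \<bar>\<tau>\<bar>)) \<ge> v * (\<sigma> * \<nu>1)" using a1 v by (simp add: mult_left_mono)
          ultimately show ?thesis by linarith
        qed
        have E3: "(1 - v) * (\<sigma> * \<nu>1) + v * (\<sigma> * \<nu>1) = \<sigma> * \<nu>1" by (simp add: algebra_simps)
        have "\<sigma> * ((1 - v) * \<nu> + v * (\<sigma> * 2 * \<bar>\<tau>\<bar>)) > \<sigma> * \<nu>1" using E1 E2 E3 by linarith
        then have "\<sigma> * \<nu>1 > \<sigma> * \<nu>1" by (simp only: eqi)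
        then show False by simp
      qed
      have z'C: "z' \<in> Cp \<or> z' \<in> Cm"
      proof -
        have "norm (W z') \<le> \<bar>\<tau>\<bar> + \<bar>\<sigma> * 2 * \<bar>\<tau>\<bar>\<bar>" using cmod_le[of "W z'"] Wz' by simp
        also have "\<dots> = 3 * \<bar>\<tau>\<bar>" using sig(2) by (simp add: abs_mult)
        also have "\<dots> < \<rho>0" using tb by simp
        finally have nz': "norm (W z') < \<rho>0" .
        have "\<bar>\<tau>\<bar> < 2 * \<bar>\<tau>\<bar>" using t0 by simp
        then show ?thesis
        proof (cases "\<sigma> = 1")
          case True then show ?thesis using nz' Wz' \<open>\<bar>\<tau>\<bar> < 2 * \<bar>\<tau>\<bar>\<close> unfolding Cp_def by simp
        next
          case False then have "\<sigma> = -1" unfolding \<sigma>_def by (auto split: if_splits)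
          then show ?thesis using nz' Wz' \<open>\<bar>\<tau>\<bar> < 2 * \<bar>\<tau>\<bar>\<close> unfolding Cm_def by simp
        qed
      qed
      show ?thesis
        by (rule exI[of _ S]) (use SB z'C in \<open>auto simp: S_def\<close>)
    qed
  qed
  have fromside: "Cp \<subseteq> X \<or> Cm \<subseteq> X" if X: "X = inside B \<or> X = outside B" and pX: "p \<in> frontier X" for X
  proof -
    have "\<rho>0 / 4 > 0" using r0 by simp
    then obtain x where x: "x \<in> X" "dist p x < \<rho>0 / 4" using pX unfolding frontier_straddle by blast
    have xB: "x \<notin> B" using x(1) X iB by blast
    obtain S where S: "connected S" "S \<inter> B = {}" "x \<in> S" "S \<inter> Cp \<noteq> {} \<or> S \<inter> Cm \<noteq> {}"
      using vert[OF x(2) xB] by blast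
    have SX: "S \<subseteq> X" using conn_side[OF S(1,2,3)] x(1) X by blast
    show ?thesis
    proof (cases "S \<inter> Cp \<noteq> {}")
      case True
      then obtain y where "y \<in> Cp" "y \<in> X" using SX by blast
      then show ?thesis using clp io X by blast
    next
      case False
      then obtain y where "y \<in> Cm" "y \<in> X" using SX S(4) by blast
      then show ?thesis using clm io X by blast
    qed
  qed
  have pfr: "p \<in> frontier (inside B)" "p \<in> frontier (outside B)" using J pB unfolding B_def by auto
  have sides: "(Cp \<subseteq> inside B \<and> Cm \<subseteq> outside B) \<or> (Cm \<subseteq> inside B \<and> Cp \<subseteq> outside B)"
    using fromside[OF _ pfr(1)] fromside[OF _ pfr(2)] clp clm io Cpne Cmne by blast
  define v0 where "v0 = (if Cp \<subseteq> inside B then u else -u)"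
  have v0c: "(v0 = u \<and> Cp \<subseteq> inside B \<and> Cm \<subseteq> outside B) \<or> (v0 = -u \<and> Cm \<subseteq> inside B \<and> Cp \<subseteq> outside B)"
  proof (cases "Cp \<subseteq> inside B")
    case True
    then have "v0 = u" unfolding v0_def by (rule if_P)
    moreover have "Cm \<subseteq> outside B" using True sides Cpne io by blast
    ultimately show ?thesis using True by blast
  next
    case False
    then have "v0 = -u" unfolding v0_def by (rule if_not_P)
    then show ?thesis using False sides by blast
  qed
  have v0u: "v0 = u \<or> v0 = -u" using v0c by blast
  have un: "norm u = 1" unfolding u_def using ne by (simp add: norm_mult)
  have ua: "inner u a = 0"
    unfolding u_def e_def by (simp add: inner_complex_def)
  have P0: "norm v0 = 1 \<and> (\<forall>t. g 0 t = p \<longrightarrow> inner v0 (g 1 t) = 0) \<and>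
      (\<exists>\<epsilon>>0. \<forall>h. 0 < h \<and> h < \<epsilon> \<longrightarrow> p + h *\<^sub>R v0 \<in> inside B)"
  proof (intro conjI allI impI)
    show "norm v0 = 1" using v0u un by (elim disjE) simp_all
  next
    fix t assume gt: "g 0 t = p"
    have "g 1 t = g 1 t0" by (rule scp_eq_der[OF g]) (use gt p in simp)
    then have "g 1 t = a" unfolding a_def .
    then show "inner v0 (g 1 t) = 0" using v0u ua by (elim disjE) simp_all
  next
    have "p + h *\<^sub>R v0 \<in> inside B" if "0 < h \<and> h < \<rho>0" for h
      using v0c upC[of h] umC[of h] that by blast
    then show "\<exists>\<epsilon>>0. \<forall>h. 0 < h \<and> h < \<epsilon> \<longrightarrow> p + h *\<^sub>R v0 \<in> inside B"
      using r0 by blast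
  qed
  have uniq: "v = v0" if P: "norm v = 1 \<and> (\<forall>t. g 0 t = p \<longrightarrow> inner v (g 1 t) = 0) \<and>
      (\<exists>\<epsilon>>0. \<forall>h. 0 < h \<and> h < \<epsilon> \<longrightarrow> p + h *\<^sub>R v \<in> inside B)" for v
  proof -
    have va: "inner v a = 0" using P p unfolding a_def by blast
    define w where "w = cnj e * v"
    have vw: "v = e * w" unfolding w_def using ecnj by (simp add: mult.assoc[symmetric])
    have nw: "norm w = 1" unfolding w_def using ne P by (simp add: norm_mult)
    have rw: "Re w = 0"
    proof -
      have na: "norm a > 0" using a0 by simp
      have "Re w = inner v a / norm a" unfolding w_def e_def
        by (simp add: inner_complex_def field_simps)
      then show ?thesis using va by simp
    qed
    have "\<bar>Im w\<bar> = 1" using nw rw unfolding cmod_def by simp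
    then have "Im w = 1 \<or> Im w = -1" by linarith
    then have "w = \<i> \<or> w = - \<i>" using rw by (auto simp: complex_eq_iff)
    then have vu: "v = u \<or> v = -u" unfolding u_def using vw by (auto simp: mult.commute)
    show ?thesis
    proof (rule ccontr)
      assume "v \<noteq> v0"
      then have vv: "(v = -u \<and> Cm \<subseteq> outside B) \<or> (v = u \<and> Cp \<subseteq> outside B)" using vu v0c by auto
      obtain \<epsilon> where ep: "\<epsilon> > 0" "\<And>h. 0 < h \<and> h < \<epsilon> \<Longrightarrow> p + h *\<^sub>R v \<in> inside B" using P by blast
      define h where "h = min \<epsilon> \<rho>0 / 2"
      have h: "0 < h" "h < \<epsilon>" "h < \<rho>0" unfolding h_def using ep r0 by auto
      have "p + h *\<^sub>R v \<in> inside B" using ep(2) h by blast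
      moreover have "p + h *\<^sub>R v \<in> outside B"
        using vv upC[OF h(1,3)] umC[OF h(1,3)] by blast
      ultimately show False using io by blast
    qed
  qed
  have "inward_normal g B p = v0"
    unfolding inward_normal_def
    by (rule the_equality) (use P0 uniq in blast)+
  then show ?thesis using P0 unfolding B_def by simp
qed



lemma E1_jump:
  assumes cad: "cadlag f" and val: "\<forall>t\<ge>0. f t = 1 \<or> f t = -1" and lt: "E1 f < ereal c"
  obtains e where "E1 f = ereal e" "0 \<le> e" "f e \<noteq> f 0"
proof -
  define S where "S = {t. 0 \<le> t \<and> f t \<noteq> f 0}"
  have E: "E1 f = Inf (ereal ` S)" unfolding E1_def S_def by simp
  have Ege: "E1 f \<ge> 0" unfolding E by (rule Inf_greatest) (auto simp: S_def)
  have Sne: "S \<noteq> {}" using lt unfolding E by auto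
  have fin: "E1 f \<noteq> \<infinity>" using lt by auto
  have finm: "E1 f \<noteq> -\<infinity>" using Ege by auto
  define e where "e = real_of_ereal (E1 f)"
  have Ee: "E1 f = ereal e" unfolding e_def using fin finm by (cases "E1 f") auto
  have e0: "0 \<le> e" using Ege Ee by simp
  have below: "f t = f 0" if "0 \<le> t" "t < e" for t
  proof (rule ccontr)
    assume "f t \<noteq> f 0"
    then have "t \<in> S" using that unfolding S_def by auto
    then have "E1 f \<le> ereal t" unfolding E by (rule INF_lower)
    then show False using Ee that by simp
  qed
  have "f e \<noteq> f 0"
  proof
    assume fe: "f e = f 0"
    have "continuous (at_right e) f" using cad e0 unfolding cadlag_def by blast
    then have "(f \<longlongrightarrow> f e) (at_right e)" by (simp add: continuous_within)
    then have ev: "eventually (\<lambda>t. dist (f t) (f e) < 1) (at_right e)"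
      by (rule tendstoD) simp
    then obtain b where b: "b > e" "\<And>t. e < t \<Longrightarrow> t < b \<Longrightarrow> dist (f t) (f e) < 1"
      unfolding eventually_at_right_field by blast
    have right: "f t = f 0" if "e < t" "t < b" for t
    proof -
      have "dist (f t) (f e) < 1" using b(2) that by blast
      moreover have "f t = 1 \<or> f t = -1" "f e = 1 \<or> f e = -1" using val that e0 by auto
      ultimately show ?thesis using fe by (auto simp: dist_real_def)
    qed
    have "ereal b \<le> Inf (ereal ` S)"
    proof (rule Inf_greatest)
      fix x assume "x \<in> ereal ` S"
      then obtain t where t: "x = ereal t" "t \<in> S" by auto
      have "\<not> t < b"
      proof
        assume tb: "t < b"
        have "0 \<le> t" "f t \<noteq> f 0" using t(2) unfolding S_def by auto
        moreover have "t < e \<or> t = e \<or> (e < t \<and> t < b)" using tb by auto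
        ultimately show False using below right fe by auto
      qed
      then show "ereal b \<le> x" using t by simp
    qed
    then show False using Ee E b(1) by simp
  qed
  then show ?thesis using that Ee e0 by blast
qed

lemma inside_of_closure:
  fixes B :: "'a::real_normed_vector set"
  assumes "closed B" "x \<in> closure (inside B)" "x \<notin> B"
  shows "x \<in> inside B"
  using assms frontier_inside_subset[OF assms(1)] closure_Un_frontier[of "inside B"] by blast

lemma outside_of_closure:
  fixes B :: "'a::real_normed_vector set"
  assumes "closed B" "x \<in> closure (outside B)" "x \<notin> B"
  shows "x \<in> outside B"
  using assms frontier_outside_subset[OF assms(1)] closure_Un_frontier[of "outside B"] by blast

lemma not_conn:
  assumes "closed P" "closed Q" "P \<inter> Q = {}" "Ob \<inter> P \<noteq> {}" "Ob \<inter> Q \<noteq> {}"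
  shows "\<not> connected (Ob \<inter> (P \<union> Q))"
  unfolding connected_closed using assms by blast

lemma push_bound:
  fixes F :: "real \<Rightarrow> complex"
  assumes int: "set_integrable M A F" and sp: "space M = UNIV"
    and nF: "\<And>r. r \<in> A \<Longrightarrow> norm (F r) = indicator C r"
  shows "norm (LINT r:A|M. F r) \<le> measure M (A \<inter> C)"
proof -
  have "norm (LINT r:A|M. F r) \<le> (LINT r:A|M. norm (F r))" by (rule set_integral_norm_bound[OF int])
  also have "(LINT r:A|M. norm (F r)) = integral\<^sup>L M (indicator (A \<inter> C))"
    unfolding set_lebesgue_integral_def
  proof (rule Bochner_Integration.integral_cong)
    fix x
    show "indicator A x *\<^sub>R norm (F x) = indicator (A \<inter> C) x"
    proof (cases "x \<in> A")
      case True then show ?thesis using nF[OF True] by (simp add: indicator_def)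
    next
      case False then show ?thesis by (simp add: indicator_def)
    qed
  qed simp
  also have "\<dots> = measure M (A \<inter> C)" using sp by simp
  finally show ?thesis .
qed

lemma zero_int:
  fixes F :: "real \<Rightarrow> complex"
  assumes "\<And>r. r \<in> A \<Longrightarrow> F r = 0"
  shows "(LINT r:A|M. F r) = 0"
proof -
  have "(\<lambda>r. indicator A r *\<^sub>R F r) = (\<lambda>r. 0)" using assms by (auto simp: indicator_def)
  then show ?thesis unfolding set_lebesgue_integral_def by simp
qed



theorem mainTheorem5:
  fixes D D0 :: "complex set" and m i :: nat and B :: "nat \<Rightarrow> complex set"
    and g :: "nat \<Rightarrow> nat \<Rightarrow> real \<Rightarrow> complex"
    and lp lm :: "nat \<Rightarrow> real" and s :: "nat \<Rightarrow> real \<Rightarrow> real"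
    and W X :: "real \<Rightarrow> complex" and L :: "nat \<Rightarrow> real \<Rightarrow> real"
    and x0 y :: complex and \<alpha> \<beta> \<gamma> \<delta> :: real
  defines "r \<equiv> r_delta \<delta> D m B g lp lm"
  assumes D0: "open D0" "bounded D0" "D = closure D0" "connected D" "simply_connected D"
    and B0: "frontier D = B 0"
    and curves: "\<And>j. j \<le> m \<Longrightarrow> smooth_jordan (B j) (g j)"
    and inD0: "\<And>j. 1 \<le> j \<Longrightarrow> j \<le> m \<Longrightarrow> B j \<subseteq> D0"
    and disj: "\<And>j k. j \<le> m \<Longrightarrow> k \<le> m \<Longrightarrow> j \<noteq> k \<Longrightarrow> B j \<inter> B k = {}"
    and rates: "\<And>j. 1 \<le> j \<Longrightarrow> j \<le> m \<Longrightarrow> lp j > 0 \<and> lm j > 0"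
    and chains: "\<And>j. 1 \<le> j \<Longrightarrow> j \<le> m \<Longrightarrow> cadlag (s j) \<and> (\<forall>t\<ge>0. s j t = 1 \<or> s j t = -1)"
    and s0: "s 0 = (\<lambda>_. 1)"
    and sinit: "\<And>j. 1 \<le> j \<Longrightarrow> j \<le> m \<Longrightarrow> s j 0 = (if x0 \<in> pos_side (B j) then 1 else -1)"
    and W: "continuous_on {0..} W" "W 0 = 0"
    and SOBM: "snapping_out_path D m B g s W x0 X L"
    and params: "\<alpha> > 0" "\<beta> > 0" "\<gamma> > 0" "\<alpha> < 1/5 - \<gamma>" "0 < \<delta>" "\<delta> < 1/2"
    and i: "1 \<le> i" "i \<le> m"
    and pts: "x0 \<in> D_delta \<delta> D m B g lp lm" "y \<in> D_delta \<delta> D m B g lp lm"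
      "norm (x0 - y) \<le> 4/5 * r"
    and sides: "(x0 \<in> pos_side (B i) \<and> y \<in> neg_side (B i)) \<or> (x0 \<in> neg_side (B i) \<and> y \<in> pos_side (B i))"
    and A: "E1 (s i) < ereal (\<alpha> * r)" "E2 (s i) > ereal (\<beta> * r)"
      "\<forall>t\<in>{0..r^2}. norm (W t - (t / r^2) *\<^sub>R (y - x0)) \<le> \<gamma> * r"
  shows "\<exists>t\<in>{0..r^2}. s i (L i t) \<noteq> s i 0"
proof (rule ccontr)
  assume H: "\<not> (\<exists>t\<in>{0..r^2}. s i (L i t) \<noteq> s i 0)"
  then have H': "\<And>t. t \<in> {0..r^2} \<Longrightarrow> s i (L i t) = s i 0" by blast
  have ch: "cadlag (s i)" "\<forall>t\<ge>0. s i t = 1 \<or> s i t = -1" using chains[OF i] by auto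
  obtain e where e: "E1 (s i) = ereal e" "0 \<le> e" "s i e \<noteq> s i 0"
    using E1_jump[OF ch A(1)] by blast
  have ea: "e < \<alpha> * r" using A(1) e(1) by simp
  have rpos: "r > 0"
  proof -
    have "\<alpha> * r > 0" using ea e(2) by linarith
    then show ?thesis using params(1) by (simp add: zero_less_mult_iff)
  qed
  note SO = SOBM[unfolded snapping_out_path_def]
  have Xc: "continuous_on {0..} X" using SO by blast
  have X0: "X 0 = x0" using SO by blast
  have Lc: "continuous_on {0..} (L i)" using SO i by blast
  have Lm: "mono_on {0..} (L i)" using SO i by blast
  have L0: "L i 0 = 0" using SO i by blast
  have Lmeas: "\<And>t. t \<ge> 0 \<Longrightarrow> L i t = measure (LS (L i)) {r \<in> {0..t}. X r \<in> B i}" using SO i by blast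
  have Xint: "\<And>t j. t \<ge> 0 \<Longrightarrow> j \<le> m \<Longrightarrow> set_integrable (LS (L j)) {0..t}
                 (\<lambda>r. (s j (L j r) * indicator (B j) (X r)) *\<^sub>R inward_normal (g j) (B j) (X r))"
    using SO by blast
  have Xeq: "\<And>t. t \<ge> 0 \<Longrightarrow> X t = x0 + W t + (\<Sum>j\<le>m. LINT r:{0..t}|LS (L j).
                 (s j (L j r) * indicator (B j) (X r)) *\<^sub>R inward_normal (g j) (B j) (X r))"
    using SO by blast
  have Xside: "\<And>t. t \<ge> 0 \<Longrightarrow> (s i (L i t) = 1 \<longrightarrow> X t \<in> pos_side (B i)) \<and>
                     (s i (L i t) = -1 \<longrightarrow> X t \<in> neg_side (B i))"
    using SO i by blast
  have Lnn: "L i t \<ge> 0" if "t \<ge> 0" for t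
    using mono_onD[OF Lm, of 0 t] that L0 by simp
  have sj: "\<And>j. j \<le> m \<Longrightarrow> smooth_closed_param (g j) \<and> B j = g j 0 ` {0..1}"
    using curves unfolding smooth_jordan_def by blast
  have Bcl: "closed (B j)" if "j \<le> m" for j
    using sj[OF that] by (metis compact_Icc compact_continuous_image compact_imp_closed scp_cont0)
  have Bcp: "compact (B j)" if "j \<le> m" for j
    using sj[OF that] by (metis compact_Icc compact_continuous_image scp_cont0)
  have Bne: "B j \<noteq> {}" if "j \<le> m" for j
    using sj[OF that] by auto
  have Lle: "L i t < e" if t: "t \<in> {0..r^2}" for t
  proof (rule ccontr)
    assume "\<not> L i t < e"
    then have "e \<le> L i t" by simp
    moreover have "L i 0 \<le> e" using L0 e(2) by simp
    moreover have "continuous_on {0..t} (L i)" using Lc by (rule continuous_on_subset) auto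
    ultimately obtain t' where t': "0 \<le> t'" "t' \<le> t" "L i t' = e"
      using IVT'[of "L i" 0 e t] t by auto
    then have "t' \<in> {0..r^2}" using t by auto
    then show False using H' e(3) t'(3) by metis
  qed
  define U where "U = (\<Union>j\<le>m. B j)"
  define V where "V = (\<Union>j\<in>{..m}-{i}. B j)"
  have UV: "U = B i \<union> V" unfolding U_def V_def using i by auto
  have Vcl: "closed V" unfolding V_def using Bcl by (intro closed_UN) auto
  have BiV: "B i \<inter> V = {}" unfolding V_def using disj i by auto
  have B0V: "B 0 \<subseteq> V" unfolding V_def using i by auto
  have x0D: "x0 \<in> D" using pts(1) unfolding D_delta_def by simp
  have x0far: "\<And>z. z \<in> U \<Longrightarrow> dist x0 z \<ge> r / 5"
    using pts(1) unfolding D_delta_def U_def r_def by blast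
  have yfar: "\<And>z. z \<in> U \<Longrightarrow> dist y z \<ge> r / 5"
    using pts(2) unfolding D_delta_def U_def r_def by blast
  have conn_r: "connected (ball x0 r \<inter> U)"
  proof -
    define RS where "RS = {r. r \<ge> 0 \<and> (\<forall>r'\<in>{0..r}. \<forall>x\<in>D. connected (ball x r' \<inter> (\<Union>j\<le>m. B j)))}"
    have rho: "rho_const D m B = Sup RS" unfolding rho_const_def RS_def by simp
    define mm where "mm = min (min (1 / kappa_max m g) (1 / lambda_max m lp lm)) (rho_const D m B)"
    have rmm: "r = \<delta> * mm" unfolding r_def r_delta_def mm_def by simp
    have mm0: "mm > 0" using rpos params(5) rmm by (simp add: zero_less_mult_iff)
    have mmr: "mm \<le> rho_const D m B" unfolding mm_def by simp
    have rr: "r < rho_const D m B"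
    proof -
      have "r \<le> \<delta> * rho_const D m B" using rmm mmr params(5) by (simp add: mult_left_mono)
      also have "\<dots> < rho_const D m B" using params(6) mm0 mmr by simp
      finally show ?thesis .
    qed
    have RSne: "RS \<noteq> {}"
    proof -
      have "0 \<in> RS" unfolding RS_def by auto
      then show ?thesis by blast
    qed
    have Ubd: "bounded U" unfolding U_def using Bcp by (intro compact_imp_bounded compact_UN) auto
    obtain R0 where R0: "R0 > 0" "U \<subseteq> ball x0 R0" using bounded_subset_ballD[OF Ubd] by blast
    have notc: "\<not> connected (Ob \<inter> U)" if "U \<subseteq> Ob" for Ob
    proof -
      have "Ob \<inter> B i \<noteq> {}" using that Bne[OF i(2)] UV by blast
      moreover have "Ob \<inter> V \<noteq> {}" using that Bne[of 0] B0V UV by blast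
      ultimately show ?thesis using not_conn[OF Bcl[OF i(2)] Vcl BiV] UV by simp
    qed
    have bdd: "bdd_above RS"
    proof (rule bdd_aboveI)
      fix x assume x: "x \<in> RS"
      show "x \<le> R0"
      proof (rule ccontr)
        assume "\<not> x \<le> R0"
        then have "R0 \<in> {0..x}" using R0 by auto
        then have "connected (ball x0 R0 \<inter> U)" using x x0D unfolding RS_def U_def by blast
        then show False using notc[OF R0(2)] by simp
      qed
    qed
    obtain r1 where r1: "r1 \<in> RS" "r < r1" using rr rho less_cSup_iff[OF RSne bdd] by auto
    then have "r \<in> {0..r1}" using rpos by auto
    then show ?thesis using r1 x0D unfolding RS_def U_def by blast
  qed
  have x0nB: "x0 \<notin> B i" using x0far[of x0] rpos UV by auto
  have ynB: "y \<notin> B i" using yfar[of y] rpos UV by auto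
  have io: "inside (B i) \<inter> outside (B i) = {}" by (rule inside_Int_outside)
  have xy: "(x0 \<in> inside (B i) \<and> y \<in> outside (B i)) \<or> (x0 \<in> outside (B i) \<and> y \<in> inside (B i))"
    using sides inside_of_closure[OF Bcl[OF i(2)]] outside_of_closure[OF Bcl[OF i(2)]] x0nB ynB
    unfolding pos_side_def neg_side_def by blast
  have zB: "ball x0 r \<inter> B i \<noteq> {}"
  proof -
    have "closed_segment x0 y \<inter> B i \<noteq> {}"
    proof
      assume e0: "closed_segment x0 y \<inter> B i = {}"
      have cs: "connected (closed_segment x0 y)" by (simp add: convex_connected)
      have ends: "x0 \<in> closed_segment x0 y" "y \<in> closed_segment x0 y" by auto
      show False using conn_side[OF cs e0 ends(1)] ends(2) xy io by blast
    qed
    then obtain z where z: "z \<in> closed_segment x0 y" "z \<in> B i" by blast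
    have "dist z x0 \<le> dist x0 y" using dist_in_closed_segment[OF z(1)] by simp
    also have "\<dots> \<le> 4/5 * r" using pts(3) by (simp add: dist_norm)
    also have "\<dots> < r" using rpos by simp
    finally show ?thesis using z(2) by (auto simp: dist_commute)
  qed
  have avoid: "z \<notin> B j" if "z \<in> ball x0 r" "j \<le> m" "j \<noteq> i" for z j
  proof
    assume "z \<in> B j"
    then have "ball x0 r \<inter> V \<noteq> {}" using that unfolding V_def by auto
    then show False using not_conn[OF Bcl[OF i(2)] Vcl BiV zB] conn_r UV by simp
  qed
  have nrm: "norm (inward_normal (g i) (B i) z) = 1" if "z \<in> B i" for z
    using normal_unit[of "g i" z] sj[OF i(2)] that by simp
  define I where "I = (\<lambda>j t. LINT r:{0..t}|LS (L j).
                 (s j (L j r) * indicator (B j) (X r)) *\<^sub>R inward_normal (g j) (B j) (X r))"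
  have core: "X t = x0 + W t + I i t \<and> norm (I i t) < \<alpha> * r"
    if t: "t \<in> {0..r^2}" and inb: "\<forall>u\<in>{0..t}. X u \<in> ball x0 r" for t
  proof
    have t0: "t \<ge> 0" using t by simp
    have z: "I j t = 0" if "j \<in> {..m} - {i}" for j
      unfolding I_def
    proof (rule zero_int)
      fix u assume "u \<in> {0..t}"
      then have "X u \<notin> B j" using avoid[of "X u" j] inb that by auto
      then show "(s j (L j u) * indicator (B j) (X u)) *\<^sub>R inward_normal (g j) (B j) (X u) = 0" by simp
    qed
    have "(\<Sum>j\<le>m. I j t) = I i t + (\<Sum>j\<in>{..m}-{i}. I j t)"
      using i by (subst sum.remove[of "{..m}" i]) auto
    also have "(\<Sum>j\<in>{..m}-{i}. I j t) = 0" using z by simp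
    finally have "(\<Sum>j\<le>m. I j t) = I i t" by simp
    then show "X t = x0 + W t + I i t" using Xeq[OF t0] unfolding I_def by simp
    have "norm (I i t) \<le> measure (LS (L i)) ({0..t} \<inter> {r. X r \<in> B i})"
      unfolding I_def
    proof (rule push_bound)
      show "set_integrable (LS (L i)) {0..t}
          (\<lambda>r. (s i (L i r) * indicator (B i) (X r)) *\<^sub>R inward_normal (g i) (B i) (X r))"
        using Xint[OF t0 i(2)] .
      show "space (LS (L i)) = UNIV" unfolding LS_def by simp
    next
      fix u assume u: "u \<in> {0..t}"
      have su: "\<bar>s i (L i u)\<bar> = 1" using ch(2) Lnn[of u] u by auto
      show "norm ((s i (L i u) * indicator (B i) (X u)) *\<^sub>R inward_normal (g i) (B i) (X u)) = indicator {r. X r \<in> B i} u"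
      proof (cases "X u \<in> B i")
        case True then show ?thesis using su nrm[OF True] by simp
      next
        case False then show ?thesis by simp
      qed
    qed
    also have "{0..t} \<inter> {r. X r \<in> B i} = {r \<in> {0..t}. X r \<in> B i}" by auto
    also have "measure (LS (L i)) \<dots> = L i t" using Lmeas[OF t0] by simp
    finally have "norm (I i t) \<le> L i t" .
    then show "norm (I i t) < \<alpha> * r" using Lle[OF t] ea by simp
  qed
  have Wb: "norm (W t) \<le> \<gamma> * r + 4/5 * r" if t: "t \<in> {0..r^2}" for t
  proof -
    have q: "0 \<le> t / r^2" "t / r^2 \<le> 1" using t rpos by auto
    have "norm (W t) \<le> norm (W t - (t / r^2) *\<^sub>R (y - x0)) + norm ((t / r^2) *\<^sub>R (y - x0))"
      using norm_triangle_ineq[of "W t - (t / r^2) *\<^sub>R (y - x0)" "(t / r^2) *\<^sub>R (y - x0)"] by simp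
    also have "norm ((t / r^2) *\<^sub>R (y - x0)) = (t / r^2) * norm (y - x0)" using q(1) by (simp only: norm_scaleR abs_of_nonneg)
    also have "\<dots> \<le> 1 * (4/5 * r)"
      using q pts(3) by (intro mult_mono) (auto simp: norm_minus_commute)
    finally show ?thesis using A(3) t by force
  qed
  define c where "c = \<gamma> * r + 4/5 * r + \<alpha> * r"
  have cr: "c < r"
  proof -
    have "(\<alpha> + \<gamma>) * r < (1/5) * r" using params(4) rpos by (intro mult_strict_right_mono) auto
    then have "\<alpha> * r + \<gamma> * r < (1/5) * r" by (simp add: distrib_right)
    then show ?thesis unfolding c_def by simp
  qed
  have bnd: "dist x0 (X t) \<le> c" if t: "t \<in> {0..r^2}" and inb: "\<forall>u\<in>{0..t}. X u \<in> ball x0 r" for t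
  proof -
    have "X t - x0 = W t + I i t" using core[OF t inb] by simp
    then have "norm (X t - x0) \<le> norm (W t) + norm (I i t)" by (simp add: norm_triangle_ineq)
    moreover have "dist x0 (X t) = norm (X t - x0)" by (simp add: dist_norm norm_minus_commute)
    ultimately show ?thesis using Wb[OF t] core[OF t inb] unfolding c_def by linarith
  qed
  have inball: "\<forall>t\<in>{0..r^2}. X t \<in> ball x0 r"
  proof (rule ccontr)
    assume nb: "\<not> (\<forall>t\<in>{0..r^2}. X t \<in> ball x0 r)"
    define K where "K = {0..r^2} \<inter> X -` (- ball x0 r)"
    have Kcl: "closed K" unfolding K_def
      by (rule continuous_closed_preimage) (auto intro: continuous_on_subset[OF Xc])
    have Kne: "K \<noteq> {}" using nb unfolding K_def by auto
    have Kbd: "bdd_below K" unfolding K_def by (rule bdd_belowI[of _ 0]) auto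
    define t1 where "t1 = Inf K"
    have t1K: "t1 \<in> K" unfolding t1_def by (rule closed_contains_Inf[OF Kne Kbd Kcl])
    have t1r: "0 \<le> t1" "t1 \<le> r^2" using t1K unfolding K_def by auto
    have bef: "X u \<in> ball x0 r" if "0 \<le> u" "u < t1" for u
    proof (rule ccontr)
      assume "X u \<notin> ball x0 r"
      then have "u \<in> K" unfolding K_def using that t1r by auto
      then have "t1 \<le> u" unfolding t1_def using Kbd by (rule cInf_lower)
      then show False using that by simp
    qed
    have t1p: "0 < t1"
    proof -
      have "0 \<notin> K" unfolding K_def using X0 rpos by auto
      then show ?thesis using t1K t1r by (metis order_le_less)
    qed
    define Z where "Z = {0..t1} \<inter> X -` cball x0 c"
    have Zcl: "closed Z" unfolding Z_def
      by (rule continuous_closed_preimage) (auto intro: continuous_on_subset[OF Xc])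
    have sub: "{0..<t1} \<subseteq> Z"
    proof
      fix u assume u: "u \<in> {0..<t1}"
      then have "u \<in> {0..r^2}" using t1r by auto
      moreover have "\<forall>v\<in>{0..u}. X v \<in> ball x0 r" using bef u by auto
      ultimately have "dist x0 (X u) \<le> c" by (rule bnd)
      then show "u \<in> Z" unfolding Z_def using u by auto
    qed
    have "closure {0..<t1} \<subseteq> Z" using closure_minimal[OF sub Zcl] .
    then have "{0..t1} \<subseteq> Z" using t1p by simp
    then have "t1 \<in> Z" using t1p by auto
    then have "dist x0 (X t1) \<le> c" unfolding Z_def by simp
    then have "X t1 \<in> ball x0 r" using cr by simp
    then show False using t1K unfolding K_def by simp
  qed
  define T where "T = r^2"
  have TT: "T \<in> {0..r^2}" unfolding T_def by simp
  have cT: "X T = x0 + W T + I i T \<and> norm (I i T) < \<alpha> * r"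
    using core[OF TT] inball TT by auto
  have Tr: "T / r^2 = 1" unfolding T_def using rpos by simp
  have "norm (W T - (T / r^2) *\<^sub>R (y - x0)) \<le> \<gamma> * r" using A(3) TT by blast
  then have wT: "norm (W T - (y - x0)) \<le> \<gamma> * r" unfolding Tr by simp
  have XTe: "X T - y = (W T - (y - x0)) + I i T" using cT by (simp add: algebra_simps)
  have "norm (X T - y) \<le> norm (W T - (y - x0)) + norm (I i T)"
    unfolding XTe by (rule norm_triangle_ineq)
  then have "norm (X T - y) < \<gamma> * r + \<alpha> * r" using wT cT by linarith
  moreover have "\<gamma> * r + \<alpha> * r < r / 5"
  proof -
    have "(\<alpha> + \<gamma>) * r < (1/5) * r" using params(4) rpos by (intro mult_strict_right_mono) auto
    then show ?thesis by (simp add: distrib_right)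
  qed
  ultimately have XTb: "X T \<in> ball y (r / 5)" by (simp add: dist_norm norm_minus_commute)
  have ybB: "ball y (r / 5) \<inter> B i = {}"
  proof -
    have "dist y z \<ge> r / 5" if "z \<in> B i" for z using yfar[of z] that UV by auto
    then show ?thesis by fastforce
  qed
  have cb: "connected (ball y (r / 5))" by simp
  have yb: "y \<in> ball y (r / 5)" using rpos by simp
  have sT: "s i (L i T) = s i 0" using H'[OF TT] .
  have sideT: "(s i (L i T) = 1 \<longrightarrow> X T \<in> pos_side (B i)) \<and> (s i (L i T) = -1 \<longrightarrow> X T \<in> neg_side (B i))"
    using Xside[of T] TT by simp
  have oi: "open (inside (B i))" "open (outside (B i))"
    using Bcl[OF i(2)] by (simp_all add: open_inside open_outside)
  show False
  proof (cases "x0 \<in> inside (B i)")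
    case True
    then have yo: "y \<in> outside (B i)" using xy io by blast
    have "x0 \<in> pos_side (B i)" using True closure_subset unfolding pos_side_def by blast
    then have "s i 0 = 1" using sinit[OF i] by simp
    then have "X T \<in> closure (inside (B i))" using sideT sT unfolding pos_side_def by simp
    moreover have "X T \<in> outside (B i)" using conn_side[OF cb ybB yb] yo XTb by blast
    moreover have "outside (B i) \<inter> closure (inside (B i)) = {}"
      using open_Int_closure_eq_empty[OF oi(2)] io by blast
    ultimately show False by blast
  next
    case False
    then have x0o: "x0 \<in> outside (B i)" and yi: "y \<in> inside (B i)" using xy by blast+
    have "x0 \<notin> pos_side (B i)"
      using inside_of_closure[OF Bcl[OF i(2)] _ x0nB] False unfolding pos_side_def by blast
    then have "s i 0 = -1" using sinit[OF i] by simp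
    then have "X T \<in> closure (outside (B i))" using sideT sT unfolding neg_side_def by simp
    moreover have "X T \<in> inside (B i)" using conn_side[OF cb ybB yb] yi XTb by blast
    moreover have "inside (B i) \<inter> closure (outside (B i)) = {}"
      using open_Int_closure_eq_empty[OF oi(1)] io by blast
    ultimately show False by blast
  qed
qed


end
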